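(* Let $X_1,X_2,\dots$ be independent integer-valued random variables with common distribution $F$, not concentrated on a half-axis, and let $S_0=0$, $S_n=X_1+\cdots+X_n$. Suppose $\mathbb E[X_1]<0$ and that for some $0<\xi<1$ and $0<r<1$, \[ P(X_1\ge x)=\xi\, r^x,\qquad x=0,1,2,\dots. \] Let $p=P(\sup_{n}S_n>0)$. Then $p<1$ and \[ P\Big(\sup_{n\ge0}S_n>x\Big)=p\,\big[1-(1-p)(1-r)\big]^x,\qquad x=0,1,2,\dots. \] Moreover, $1/[1-(1-p)(1-r)]$ is the unique root of the equation \[ \sum_{x=-\infty}^{\infty}s^x P(X_1=x)=1 \] in the range $1<s<1/r$. *)

theory Defs
  imports "HOL-Probability.Probability"
begin

text \<open>Mean of an integer distribution is negative, in the extended sense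
  (E X^+ < E X^-; this allows E X = -infinity as well as finite negative mean).\<close>
definition mean_negative :: "int pmf \<Rightarrow> bool" where
  "mean_negative F \<longleftrightarrow>
     (\<integral>\<^sup>+ x. ennreal (of_int (max x 0)) \<partial>measure_pmf F)
       < (\<integral>\<^sup>+ x. ennreal (of_int (max (- x) 0)) \<partial>measure_pmf F)"

definition not_on_half_axis :: "int pmf \<Rightarrow> bool" where
  "not_on_half_axis F \<longleftrightarrow>
     measure_pmf.prob F {0<..} > 0 \<and> measure_pmf.prob F {..<0} > 0"

text \<open>Random walk S_n = X_1 + ... + X_n, where X_(i+1) is represented by X i.\<close>
definition walk :: "(nat \<Rightarrow> 'a \<Rightarrow> int) \<Rightarrow> nat \<Rightarrow> 'a \<Rightarrow> int" where
  "walk X n \<omega> = (\<Sum>i<n. X i \<omega>)"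

end

theory Submission imports Defs begin

lemma pmf_has_sum: "(pmf p has_sum measure_pmf.prob p A) A"
proof -
  have a: "Infinite_Set_Sum.abs_summable_on (pmf p) A" by (rule pmf_abs_summable)
  have s: "pmf p summable_on A"
    using a abs_summable_equivalent[of "pmf p" A] summable_on_iff_abs_summable_on_real[of "pmf p" A] by blast
  have "infsum (pmf p) A = measure_pmf.prob p A"
    using infsetsum_infsum[OF a] measure_pmf_conv_infsetsum[of p A] by simp
  thus ?thesis using s has_sum_iff by blast
qed

lemma nn_integral_has_sum:
  fixes g :: "'a \<Rightarrow> real"
  assumes "(g has_sum S) UNIV" "\<And>x. g x \<ge> 0"
  shows "(\<integral>\<^sup>+x. ennreal (g x) \<partial>count_space UNIV) = ennreal S"
proof -
  have s: "g summable_on UNIV" using assms(1) has_sum_imp_summable by blast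
  have a: "Infinite_Set_Sum.abs_summable_on g UNIV"
    using s abs_summable_equivalent[of g UNIV] summable_on_iff_abs_summable_on_real[of g UNIV] by blast
  have "(\<integral>\<^sup>+x. ennreal (g x) \<partial>count_space UNIV) = ennreal (infsetsum g UNIV)"
    using nn_integral_conv_infsetsum[OF a] assms(2) by simp
  also have "infsetsum g UNIV = S" using infsetsum_infsum[OF a] assms(1) infsumI by metis
  finally show ?thesis .
qed

definition hit :: "int \<Rightarrow> int stream \<Rightarrow> bool" where
  "hit z s \<longleftrightarrow> (\<exists>n. z < sum_list (stake n s))"
definition hitN :: "nat \<Rightarrow> int \<Rightarrow> int stream \<Rightarrow> bool" where
  "hitN N z s \<longleftrightarrow> (\<exists>n\<le>N. z < sum_list (stake n s))"

lemma hit_Cons: "hit z (t ## s) \<longleftrightarrow> z < 0 \<or> hit (z - t) s"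
proof
  assume "hit z (t ## s)"
  then obtain n where n: "z < sum_list (stake n (t ## s))" by (auto simp: hit_def)
  show "z < 0 \<or> hit (z - t) s"
  proof (cases n)
    case 0 thus ?thesis using n by simp
  next
    case (Suc m) thus ?thesis using n by (auto simp: hit_def intro!: disjI2 exI[of _ m])
  qed
next
  assume "z < 0 \<or> hit (z - t) s"
  thus "hit z (t ## s)"
  proof
    assume "z < 0" thus ?thesis by (auto simp: hit_def intro!: exI[of _ 0])
  next
    assume "hit (z - t) s"
    then obtain n where "z - t < sum_list (stake n s)" by (auto simp: hit_def)
    thus ?thesis by (auto simp: hit_def intro!: exI[of _ "Suc n"])
  qed
qed

lemma hitN_Cons: "hitN (Suc N) z (t ## s) \<longleftrightarrow> z < 0 \<or> hitN N (z - t) s"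
proof
  assume "hitN (Suc N) z (t ## s)"
  then obtain n where n: "n \<le> Suc N" "z < sum_list (stake n (t ## s))" by (auto simp: hitN_def)
  show "z < 0 \<or> hitN N (z - t) s"
  proof (cases n)
    case 0 thus ?thesis using n by simp
  next
    case (Suc m) thus ?thesis using n by (auto simp: hitN_def)
  qed
next
  assume "z < 0 \<or> hitN N (z - t) s"
  thus "hitN (Suc N) z (t ## s)"
  proof
    assume "z < 0" thus ?thesis by (auto simp: hitN_def intro!: exI[of _ 0])
  next
    assume "hitN N (z - t) s"
    then obtain n where "n \<le> N" "z - t < sum_list (stake n s)" by (auto simp: hitN_def)
    thus ?thesis by (auto simp: hitN_def intro!: exI[of _ "Suc n"])
  qed
qed

lemma hitN_0: "hitN 0 z s \<longleftrightarrow> z < 0" by (simp add: hitN_def)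
lemma hit_neg: "z < 0 \<Longrightarrow> hit z s" by (auto simp: hit_def intro!: exI[of _ 0])

context fixes F :: "int pmf" begin

lemma sets_S: "sets (stream_space (measure_pmf F)) = sets (stream_space (count_space UNIV))"
  by (rule sets_stream_space_cong) simp

lemma pred_stake: "Measurable.pred (stream_space (measure_pmf F)) (\<lambda>s. P (stake n s))"
proof -
  have "stake n \<in> measurable (stream_space (measure_pmf F)) (count_space UNIV)"
    unfolding measurable_cong_sets[OF sets_S refl] by measurable
  thus ?thesis by (rule measurable_compose) simp
qed

lemma hit_sets: "{s \<in> space (stream_space (measure_pmf F)). hit z s} \<in> sets (stream_space (measure_pmf F))"
  unfolding hit_def by (intro predE pred_intros_countable(2) pred_stake)

lemma hitN_sets: "{s \<in> space (stream_space (measure_pmf F)). hitN N z s} \<in> sets (stream_space (measure_pmf F))"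
  unfolding hitN_def by (intro predE pred_intros_countable(2) pred_stake)

abbreviation "SS \<equiv> stream_space (measure_pmf F)"

lemma space_SS[simp]: "space SS = UNIV"
  by (simp add: space_stream_space)

lemma prob_SS: "prob_space SS"
  by (rule prob_space.prob_space_stream_space[OF prob_space_measure_pmf])

lemma E_step:
  assumes "0 \<le> z"
  shows "emeasure SS {s \<in> space SS. hit z s} = (\<integral>\<^sup>+ t. emeasure SS {s \<in> space SS. hit (z - t) s} \<partial>measure_pmf F)"
proof -
  have "emeasure SS {s \<in> space SS. hit z s} =
      (\<integral>\<^sup>+ t. emeasure SS {x \<in> space SS. t ## x \<in> {s \<in> space SS. hit z s}} \<partial>measure_pmf F)"
    by (rule prob_space.emeasure_stream_space[OF prob_space_measure_pmf hit_sets])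
  also have "\<dots> = (\<integral>\<^sup>+ t. emeasure SS {s \<in> space SS. hit (z - t) s} \<partial>measure_pmf F)"
    using assms by (intro nn_integral_cong arg_cong2[where f=emeasure] refl) (auto simp: hit_Cons)
  finally show ?thesis .
qed

lemma EN_step:
  assumes "0 \<le> z"
  shows "emeasure SS {s \<in> space SS. hitN (Suc N) z s} = (\<integral>\<^sup>+ t. emeasure SS {s \<in> space SS. hitN N (z - t) s} \<partial>measure_pmf F)"
proof -
  have "emeasure SS {s \<in> space SS. hitN (Suc N) z s} =
      (\<integral>\<^sup>+ t. emeasure SS {x \<in> space SS. t ## x \<in> {s \<in> space SS. hitN (Suc N) z s}} \<partial>measure_pmf F)"
    by (rule prob_space.emeasure_stream_space[OF prob_space_measure_pmf hitN_sets])
  also have "\<dots> = (\<integral>\<^sup>+ t. emeasure SS {s \<in> space SS. hitN N (z - t) s} \<partial>measure_pmf F)"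
    using assms by (intro nn_integral_cong arg_cong2[where f=emeasure] refl) (auto simp: hitN_Cons)
  finally show ?thesis .
qed

lemma minimal:
  fixes G :: "int \<Rightarrow> ennreal"
  assumes neg: "\<And>z. z < 0 \<Longrightarrow> 1 \<le> G z"
    and sup: "\<And>z. 0 \<le> z \<Longrightarrow> (\<integral>\<^sup>+ t. G (z - t) \<partial>measure_pmf F) \<le> G z"
  shows "emeasure SS {s \<in> space SS. hit z s} \<le> G z"
proof -
  interpret P: prob_space SS by (rule prob_SS)
  have N: "emeasure SS {s \<in> space SS. hitN N z s} \<le> G z" for N z
  proof (induction N arbitrary: z)
    case 0
    show ?case
    proof (cases "z < 0")
      case True
      hence "emeasure SS {s \<in> space SS. hitN 0 z s} = 1" using P.emeasure_space_1 by (simp add: hitN_0)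
      thus ?thesis using neg True by simp
    next
      case False
      thus ?thesis by (simp add: hitN_0)
    qed
  next
    case (Suc N)
    show ?case
    proof (cases "z < 0")
      case True
      hence "{s \<in> space SS. hitN (Suc N) z s} = space SS" by (auto simp: hitN_def intro!: exI[of _ 0])
      hence "emeasure SS {s \<in> space SS. hitN (Suc N) z s} = 1" using P.emeasure_space_1 by simp
      thus ?thesis using neg True by simp
    next
      case False
      hence "emeasure SS {s \<in> space SS. hitN (Suc N) z s} = (\<integral>\<^sup>+ t. emeasure SS {s \<in> space SS. hitN N (z - t) s} \<partial>measure_pmf F)"
        by (intro EN_step) simp
      also have "\<dots> \<le> (\<integral>\<^sup>+ t. G (z - t) \<partial>measure_pmf F)"
        by (intro nn_integral_mono Suc.IH)
      also have "\<dots> \<le> G z" using False by (intro sup) simp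
      finally show ?thesis .
    qed
  qed
  have inc: "incseq (\<lambda>N. {s \<in> space SS. hitN N z s})" by (auto simp: incseq_def hitN_def intro: order_trans)
  have rng: "range (\<lambda>N. {s \<in> space SS. hitN N z s}) \<subseteq> sets SS" using hitN_sets by auto
  have "(SUP N. emeasure SS {s \<in> space SS. hitN N z s}) = emeasure SS (\<Union>N. {s \<in> space SS. hitN N z s})"
    by (intro SUP_emeasure_incseq rng inc)
  also have "(\<Union>N. {s \<in> space SS. hitN N z s}) = {s \<in> space SS. hit z s}"
    by (auto simp: hitN_def hit_def)
  finally have "emeasure SS {s \<in> space SS. hit z s} = (SUP N. emeasure SS {s \<in> space SS. hitN N z s})" ..
  also have "\<dots> \<le> G z" by (intro SUP_least N)
  finally show ?thesis .
qed

definition h :: "int \<Rightarrow> real" where "h z = measure SS {s \<in> space SS. hit z s}"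

lemma E_h: "emeasure SS {s \<in> space SS. hit z s} = ennreal (h z)"
proof -
  interpret P: prob_space SS by (rule prob_SS)
  show ?thesis unfolding h_def by (rule P.emeasure_eq_measure)
qed

lemma h_neg: "z < 0 \<Longrightarrow> h z = 1"
proof -
  interpret P: prob_space SS by (rule prob_SS)
  assume "z < 0"
  hence "{s \<in> space SS. hit z s} = space SS" by (auto intro: hit_neg)
  thus ?thesis unfolding h_def using P.prob_space by simp
qed

lemma h_nonneg: "0 \<le> h z" unfolding h_def by simp
lemma h_le1: "h z \<le> 1"
proof -
  interpret P: prob_space SS by (rule prob_SS)
  show ?thesis unfolding h_def by simp
qed

lemma nn_pmf_has_sum:
  fixes w :: "int \<Rightarrow> real"
  assumes "((\<lambda>t. pmf F t * w t) has_sum V) UNIV" "\<And>t. 0 \<le> w t"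
  shows "(\<integral>\<^sup>+ t. ennreal (w t) \<partial>measure_pmf F) = ennreal V"
proof -
  have "(\<integral>\<^sup>+ t. ennreal (w t) \<partial>measure_pmf F) = (\<integral>\<^sup>+ t. ennreal (pmf F t) * ennreal (w t) \<partial>count_space UNIV)"
    by (rule nn_integral_measure_pmf)
  also have "\<dots> = (\<integral>\<^sup>+ t. ennreal (pmf F t * w t) \<partial>count_space UNIV)"
    by (intro nn_integral_cong) (simp add: ennreal_mult')
  also have "\<dots> = ennreal V"
    by (rule nn_integral_has_sum[OF assms(1)]) (use assms(2) in simp)
  finally show ?thesis .
qed

lemma h_eq:
  assumes "0 \<le> x"
  shows "((\<lambda>t. pmf F t * h (x - t)) has_sum h x) UNIV"
proof -
  have "(\<lambda>t. pmf F t * h (x - t)) summable_on UNIV"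
  proof (rule summable_on_comparison_test[where f="pmf F"])
    show "pmf F summable_on UNIV" using pmf_has_sum[of F UNIV] has_sum_imp_summable by blast
  qed (auto simp: h_nonneg h_le1 mult_left_le)
  then obtain V where V: "((\<lambda>t. pmf F t * h (x - t)) has_sum V) UNIV" using has_sum_infsum by blast
  have "V \<ge> 0" using V by (rule has_sum_nonneg) (simp add: h_nonneg)
  have "ennreal (h x) = (\<integral>\<^sup>+ t. ennreal (h (x - t)) \<partial>measure_pmf F)"
    using E_step[OF assms] by (simp only: E_h)
  also have "\<dots> = ennreal V" by (rule nn_pmf_has_sum[OF V h_nonneg])
  finally have "h x = V" using \<open>V \<ge> 0\<close> h_nonneg by simp
  thus ?thesis using V by simp
qed

lemma h_min:
  fixes g :: "int \<Rightarrow> real"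
  assumes nn: "\<And>z. 0 \<le> g z" and neg: "\<And>z. z < 0 \<Longrightarrow> 1 \<le> g z"
    and sup: "\<And>z. 0 \<le> z \<Longrightarrow> ((\<lambda>t. pmf F t * g (z - t)) has_sum g z) UNIV"
  shows "h z \<le> g z"
proof -
  have "ennreal (h z) \<le> ennreal (g z)"
    unfolding E_h[symmetric]
  proof (rule minimal)
    fix z :: int assume "z < 0" thus "1 \<le> ennreal (g z)" using neg by simp
  next
    fix z :: int assume "0 \<le> z"
    thus "(\<integral>\<^sup>+ t. ennreal (g (z - t)) \<partial>measure_pmf F) \<le> ennreal (g z)"
      using nn_pmf_has_sum[OF sup nn] by simp
  qed
  thus ?thesis using nn by simp
qed

end

lemma sum_list_stake: "sum_list (stake n s) = (\<Sum>i<n. s !! i)"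
  by (induction n) (simp_all add: stake_Suc del: stake.simps(2))

lemma transfer:
  fixes M :: "'a measure" and X :: "nat \<Rightarrow> 'a \<Rightarrow> int" and F :: "int pmf"
  assumes "prob_space M"
    and ind: "prob_space.indep_vars M (\<lambda>_. count_space UNIV) X UNIV"
    and dist: "\<And>i. distr M (count_space UNIV) (X i) = measure_pmf F"
  shows "measure M {\<omega> \<in> space M. \<exists>n. walk X n \<omega> > z} = h F z"
proof -
  interpret prob_space M by fact
  have rv: "random_variable (count_space UNIV) (X i)" for i
    using ind unfolding indep_vars_def by auto
  define Z where "Z = (\<lambda>\<omega>. \<lambda>i\<in>UNIV. X i \<omega>)"
  have D: "distr M (\<Pi>\<^sub>M i\<in>UNIV. count_space UNIV) Z = (\<Pi>\<^sub>M i\<in>UNIV. measure_pmf F)"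
    using indep_vars_iff_distr_eq_PiM[of UNIV X "\<lambda>_. count_space UNIV"] rv ind dist
    unfolding Z_def by simp
  have D': "distr M (\<Pi>\<^sub>M i\<in>UNIV. measure_pmf F) Z = (\<Pi>\<^sub>M i\<in>UNIV. measure_pmf F)"
    unfolding D[symmetric] by (intro distr_cong refl sets_PiM_cong) auto
  have Zm: "Z \<in> measurable M (\<Pi>\<^sub>M i\<in>UNIV. measure_pmf F)"
    unfolding Z_def using rv by (intro measurable_restrict) simp
  define Y where "Y = (\<lambda>\<omega>. to_stream (\<lambda>i. X i \<omega>))"
  have Ym: "Y \<in> measurable M (SS F)"
  proof -
    have "to_stream \<circ> Z \<in> measurable M (SS F)"
      using measurable_to_stream Zm by (rule measurable_comp[rotated])
    moreover have "to_stream \<circ> Z = Y" by (auto simp: Z_def Y_def fun_eq_iff restrict_UNIV)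
    ultimately show ?thesis by simp
  qed
  have DY: "distr M (SS F) Y = SS F"
  proof -
    have "SS F = distr (\<Pi>\<^sub>M i\<in>UNIV. measure_pmf F) (SS F) to_stream" by (rule stream_space_eq_distr)
    also have "\<dots> = distr (distr M (\<Pi>\<^sub>M i\<in>UNIV. measure_pmf F) Z) (SS F) to_stream" by (simp only: D')
    also have "\<dots> = distr M (SS F) (to_stream \<circ> Z)"
      by (rule distr_distr[OF measurable_to_stream Zm])
    also have "to_stream \<circ> Z = Y" by (auto simp: Z_def Y_def fun_eq_iff restrict_UNIV)
    finally show ?thesis ..
  qed
  have "measure (SS F) {s \<in> space (SS F). hit z s} = measure M (Y -` {s \<in> space (SS F). hit z s} \<inter> space M)"
    by (subst DY[symmetric], rule measure_distr[OF Ym hit_sets])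
  also have "Y -` {s \<in> space (SS F). hit z s} \<inter> space M = {\<omega> \<in> space M. \<exists>n. walk X n \<omega> > z}"
    by (auto simp: Y_def hit_def sum_list_stake walk_def to_stream_def)
  finally show ?thesis unfolding h_def by simp
qed


lemma alg1: fixes q r A B \<xi> :: real
  shows "q \<noteq> 0 \<Longrightarrow> q - r \<noteq> 0 \<Longrightarrow> 1 - r \<noteq> 0 \<Longrightarrow> A \<noteq> 0 \<Longrightarrow> \<xi>*(1-r)*(B/(q*A))/((q-r)/q) = (\<xi>*(1-r)*B)/((q-r)*A)"
  by (simp add: field_simps)
lemma alg2: fixes q r A B \<xi> :: real
  shows "q - r \<noteq> 0 \<Longrightarrow> 1 - r \<noteq> 0 \<Longrightarrow> A \<noteq> 0 \<Longrightarrow> (q-r)/(1-r) * A * ((\<xi>*(1-r)*B)/((q-r)*A)) = \<xi>*B"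
proof -
  assume a: "q - r \<noteq> 0" "1 - r \<noteq> 0" "A \<noteq> 0"
  have "(q-r)/(1-r) * A * ((\<xi>*(1-r)*B)/((q-r)*A)) = (\<xi>*B) * (((q-r)*A*(1-r)) / ((1-r)*((q-r)*A)))"
    by (simp add: mult_ac)
  also have "((q-r)*A*(1-r)) / ((1-r)*((q-r)*A)) = 1" using a by (simp add: mult_ac)
  finally show ?thesis by simp
qed

locale geo =
  fixes F :: "int pmf" and \<xi> r :: real
  assumes xi: "0 < \<xi>" "\<xi> < 1" and r: "0 < r" "r < 1"
    and tail: "\<And>x::nat. measure_pmf.prob F {int x..} = \<xi> * r ^ x"
begin

definition a :: "nat \<Rightarrow> real" where "a n = (if n = 0 then 0 else pmf F (- int n))"
definition P :: "real \<Rightarrow> real" where "P u = (\<Sum>n. a n * u ^ n)"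
definition phi :: "real \<Rightarrow> real" where "phi s = P (1/s) + \<xi> * (1 - r) / (1 - r * s)"

lemma pmf_pos: "pmf F (int k) = \<xi> * (1 - r) * r ^ k"
proof -
  have e: "{int k..} = {int k} \<union> {int (Suc k)..}" by auto
  have "measure_pmf.prob F ({int k} \<union> {int (Suc k)..}) = measure_pmf.prob F {int k} + measure_pmf.prob F {int (Suc k)..}"
    by (rule measure_pmf.finite_measure_Union) auto
  hence "measure_pmf.prob F {int k..} = measure_pmf.prob F {int k} + measure_pmf.prob F {int (Suc k)..}"
    by (simp only: e)
  thus ?thesis using tail[of k] tail[of "Suc k"] by (simp add: measure_pmf_single algebra_simps)
qed

lemma a_nonneg: "a n \<ge> 0" by (simp add: a_def)

lemma neg_has_sum:
  assumes s: "1 \<le> s"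
  shows "((\<lambda>t. s powi t * pmf F t) has_sum P (1/s)) {..<0}"
proof -
  have le: "s powi t * pmf F t \<le> pmf F t" if "t < 0" for t
  proof -
    have "s powi t \<le> 1" using s that by (simp add: power_int_def inverse_le_1_iff power_le_one)
    thus ?thesis using mult_right_mono[of "s powi t" 1 "pmf F t"] by simp
  qed
  have "(\<lambda>t. s powi t * pmf F t) summable_on {..<0}"
    apply (rule summable_on_comparison_test[where f="pmf F"])
    using pmf_has_sum[of F "{..<0}"] has_sum_imp_summable apply blast
    using le s by auto
  then obtain V where V: "((\<lambda>t. s powi t * pmf F t) has_sum V) {..<0}"
    using has_sum_infsum by blast
  have "((\<lambda>n. a n * (1/s) ^ n) has_sum V) {1..}"
  proof -
    have "((\<lambda>t. s powi t * pmf F t) has_sum V) {..<0} = ((\<lambda>n. a n * (1/s) ^ n) has_sum V) {1..}"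
    proof (rule has_sum_reindex_bij_witness[where i="\<lambda>n. - int n" and j="\<lambda>t. nat (- t)"])
      fix t :: int assume "t \<in> {..<0}"
      thus "a (nat (- t)) * (1 / s) ^ nat (- t) = s powi t * pmf F t"
        by (simp add: a_def power_int_def power_one_over field_simps)
    qed auto
    thus ?thesis using V by simp
  qed
  hence "((\<lambda>n. a n * (1/s) ^ n) has_sum V) UNIV"
    by (subst has_sum_cong_neutral[where T="{1..}"]) (auto simp: a_def)
  hence "(\<lambda>n. a n * (1/s) ^ n) sums V" by (rule has_sum_imp_sums)
  hence "P (1/s) = V" unfolding P_def by (simp add: sums_iff)
  thus ?thesis using V by simp
qed

lemma pos_has_sum:
  assumes s: "0 < s" "s < 1/r"
  shows "((\<lambda>t. s powi t * pmf F t) has_sum (\<xi> * (1 - r) / (1 - r * s))) {0..}"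
proof -
  have rs: "r * s < 1" "0 \<le> r * s" using s r by (auto simp: field_simps)
  have "(\<lambda>k. (r * s) ^ k) sums (1 / (1 - r * s))" using geometric_sums[of "r * s"] rs by simp
  hence "((\<lambda>k. (r * s) ^ k) has_sum (1 / (1 - r * s))) UNIV"
    by (rule sums_nonneg_imp_has_sum) (use rs in simp)
  from has_sum_cmult_right[OF this, of "\<xi> * (1 - r)"]
  have h: "((\<lambda>k. \<xi> * (1 - r) * (r * s) ^ k) has_sum (\<xi> * (1 - r) / (1 - r * s))) UNIV"
    by (simp add: mult.assoc)
  have "((\<lambda>t. s powi t * pmf F t) has_sum (\<xi> * (1 - r) / (1 - r * s))) {0..}
     = ((\<lambda>k. \<xi> * (1 - r) * (r * s) ^ k) has_sum (\<xi> * (1 - r) / (1 - r * s))) UNIV"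
  proof (rule has_sum_reindex_bij_witness[where i="\<lambda>n. int n" and j="\<lambda>t. nat t"])
    fix t :: int assume "t \<in> {0..}"
    thus "\<xi> * (1 - r) * (r * s) ^ nat t = s powi t * pmf F t"
      using pmf_pos[of "nat t"] by (simp add: power_int_def power_mult_distrib)
  qed auto
  thus ?thesis using h by simp
qed

lemma phi_has_sum:
  assumes s: "1 \<le> s" "s < 1/r"
  shows "((\<lambda>t. s powi t * pmf F t) has_sum phi s) UNIV"
proof -
  have "((\<lambda>t. s powi t * pmf F t) has_sum (P (1/s) + \<xi> * (1 - r) / (1 - r * s))) ({..<0} \<union> {0..})"
    by (rule has_sum_Un_disjoint[OF neg_has_sum pos_has_sum]) (use s in auto)
  moreover have "{..<0} \<union> {0..} = (UNIV :: int set)" by auto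
  ultimately show ?thesis by (simp add: phi_def)
qed

lemma phi1: "phi 1 = 1"
proof -
  have "1 < 1/r" using r by simp
  hence "((\<lambda>t. 1 powi t * pmf F t) has_sum phi 1) UNIV" using phi_has_sum[of 1] by simp
  moreover have "((\<lambda>t. 1 powi t * pmf F t) has_sum 1) UNIV" using pmf_has_sum[of F UNIV] by simp
  ultimately show ?thesis using has_sum_unique by blast
qed

lemma a_has_sum: "(a has_sum measure_pmf.prob F {..<0}) UNIV"
proof -
  have "(pmf F has_sum measure_pmf.prob F {..<0}) {..<0} = (a has_sum measure_pmf.prob F {..<0}) {1..}"
    by (rule has_sum_reindex_bij_witness[where i="\<lambda>n. - int n" and j="\<lambda>t. nat (- t)"])
       (auto simp: a_def)
  hence "(a has_sum measure_pmf.prob F {..<0}) {1..}" using pmf_has_sum by blast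
  thus ?thesis by (subst has_sum_cong_neutral[where T="{1..}"]) (auto simp: a_def)
qed

lemma P_summable: "summable (\<lambda>n. a n * 1 ^ n)"
  using has_sum_imp_sums[OF a_has_sum] by (auto simp: sums_iff)


lemma a_summable: "summable a"
  using P_summable by simp

lemma P_summable_u: assumes "0 \<le> u" "u \<le> 1" shows "summable (\<lambda>n. a n * u ^ n)"
proof (rule summable_comparison_test'[OF a_summable])
  fix n :: nat
  have "u ^ n \<le> 1" using assms by (simp add: power_le_one)
  hence "a n * u ^ n \<le> a n" using a_nonneg[of n] mult_left_mono[of "u^n" 1 "a n"] by simp
  thus "norm (a n * u ^ n) \<le> a n" using a_nonneg[of n] assms by simp
qed

lemma P_nonneg: assumes "0 \<le> u" "u \<le> 1" shows "0 \<le> P u"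
  unfolding P_def using P_summable_u[OF assms] a_nonneg assms
  by (intro suminf_nonneg) auto

lemma sum_k_rk: "(\<Sum>k<m. real k * r ^ k) * (1 - r)^2 = r - real m * r ^ m + (real m - 1) * r ^ (Suc m)"
proof (induction m)
  case 0 thus ?case by simp
next
  case (Suc m)
  have "(\<Sum>k<Suc m. real k * r ^ k) * (1 - r)^2 = (\<Sum>k<m. real k * r ^ k) * (1 - r)^2 + real m * r ^ m * (1-r)^2"
    by (simp add: algebra_simps)
  also have "\<dots> = r - real (Suc m) * r ^ (Suc m) + (real (Suc m) - 1) * r ^ (Suc (Suc m))"
    using Suc by (simp add: power2_eq_square algebra_simps)
  finally show ?case .
qed

lemma Eplus_ge: "ennreal (\<xi> * r / (1 - r)) \<le> (\<integral>\<^sup>+ x. ennreal (of_int (max x 0)) \<partial>measure_pmf F)"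
proof -
  define E where "E = (\<integral>\<^sup>+ x. ennreal (of_int (max x 0)) \<partial>measure_pmf F)"
  define S where "S m = \<xi> * (1 - r) * (\<Sum>k<m. real k * r ^ k)" for m
  have fin: "ennreal (S m) \<le> E" for m
  proof -
    have "S m = (\<Sum>k<m. real k * (\<xi> * (1 - r) * r ^ k))"
      unfolding S_def by (simp add: sum_distrib_left mult_ac)
    hence "ennreal (S m) = (\<Sum>k<m. ennreal (real k * (\<xi> * (1 - r) * r ^ k)))"
      using xi r by (simp add: sum_ennreal)
    also have "\<dots> = (\<Sum>k<m. ennreal (of_int (max (int k) 0)) * pmf F (int k))"
      using xi r by (intro sum.cong refl) (simp add: pmf_pos ennreal_mult'')
    also have "\<dots> = (\<Sum>x\<in>int ` {..<m}. ennreal (of_int (max x 0)) * pmf F x)"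
      by (simp add: sum.reindex)
    also have "\<dots> = (\<integral>\<^sup>+ x. ennreal (of_int (max x 0)) * indicator (int ` {..<m}) x \<partial>measure_pmf F)"
      by (subst nn_integral_measure_pmf_support[where A="int ` {..<m}"]) auto
    also have "\<dots> \<le> E" unfolding E_def
      by (intro nn_integral_mono) (auto split: split_indicator)
    finally show ?thesis .
  qed
  have "S \<longlonglongrightarrow> \<xi> * (1 - r) * (r / (1 - r)^2)"
  proof -
    have eq: "S m = \<xi> * (1 - r) * ((r - real m * r ^ m + (real m * r ^ m * r - r ^ m * r)) / (1 - r)^2)" for m
    proof -
      have d: "(1 - r)^2 \<noteq> 0" using r by simp
      have "(\<Sum>k<m. real k * r ^ k) = (r - real m * r ^ m + (real m - 1) * r ^ (Suc m)) / (1 - r)^2"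
        using sum_k_rk[of m] d by (simp add: eq_divide_eq)
      also have "(real m - 1) * r ^ (Suc m) = real m * r ^ m * r - r ^ m * r" by (simp add: algebra_simps)
      finally show ?thesis unfolding S_def by simp
    qed
    have "(\<lambda>m. real m * r ^ m) \<longlonglongrightarrow> 0" using powser_times_n_limit_0[of r] r by simp
    moreover have "(\<lambda>m. r ^ m) \<longlonglongrightarrow> 0" using r by (intro LIMSEQ_power_zero) auto
    ultimately have "(\<lambda>m. \<xi> * (1 - r) * ((r - real m * r ^ m + (real m * r ^ m * r - r ^ m * r)) / (1 - r)^2))
        \<longlonglongrightarrow> \<xi> * (1 - r) * ((r - 0 + (0 * r - 0 * r)) / (1 - r)^2)"
      by (intro tendsto_intros) (use r in auto)
    thus ?thesis unfolding eq by simp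
  qed
  moreover have "\<xi> * (1 - r) * (r / (1 - r)^2) = \<xi> * r / (1 - r)"
  proof -
    have d: "1 - r \<noteq> 0" using r by simp
    have "\<xi> * (1 - r) * (r / (1 - r)^2) = \<xi> * r * ((1 - r) / ((1 - r) * (1 - r)))" by (simp add: power2_eq_square)
    also have "(1 - r) / ((1 - r) * (1 - r)) = 1 / (1 - r)" using d by simp
    finally show ?thesis by simp
  qed
  ultimately have "S \<longlonglongrightarrow> \<xi> * r / (1 - r)" by simp
  hence "(\<lambda>m. ennreal (S m)) \<longlonglongrightarrow> ennreal (\<xi> * r / (1 - r))" by (rule tendsto_ennrealI)
  hence "ennreal (\<xi> * r / (1 - r)) \<le> E" using fin by (intro LIMSEQ_le_const2) auto
  thus ?thesis unfolding E_def .
qed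

definition A :: "nat \<Rightarrow> real" where "A K = (\<Sum>n\<le>K. real n * a n)"

lemma Eminus_SUP: "(\<integral>\<^sup>+ x. ennreal (of_int (max (- x) 0)) \<partial>measure_pmf F) = (SUP K. ennreal (A K))"
proof -
  define g where "g K x = ennreal (of_int (max (- x) 0)) * indicator {- int K..} x" for K x
  have inc: "incseq g"
    by (auto simp: incseq_def le_fun_def g_def split: split_indicator)
  have sup: "(SUP K. g K x) = ennreal (of_int (max (- x) 0))" for x
  proof (rule antisym)
    show "(SUP K. g K x) \<le> ennreal (of_int (max (- x) 0))"
      by (intro SUP_least) (auto simp: g_def split: split_indicator)
    have "g (nat (- x)) x = ennreal (of_int (max (- x) 0))"
      by (auto simp: g_def split: split_indicator)
    thus "ennreal (of_int (max (- x) 0)) \<le> (SUP K. g K x)"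
      by (metis SUP_upper UNIV_I)
  qed
  have int: "(\<integral>\<^sup>+ x. g K x \<partial>measure_pmf F) = ennreal (A K)" for K
  proof -
    have "(\<integral>\<^sup>+ x. g K x \<partial>measure_pmf F) = (\<Sum>x\<in>{- int K..0}. g K x * pmf F x)"
      by (rule nn_integral_measure_pmf_support) (auto simp: g_def split: split_indicator)
    also have "\<dots> = (\<Sum>n\<le>K. g K (- int n) * pmf F (- int n))"
      by (rule sum.reindex_bij_witness[where i="\<lambda>n. - int n" and j="\<lambda>x. nat (- x)"]) auto
    also have "\<dots> = (\<Sum>n\<le>K. ennreal (real n * a n))"
      by (intro sum.cong refl) (auto simp: g_def a_def ennreal_mult'' split: split_indicator)
    also have "\<dots> = ennreal (A K)" unfolding A_def
      using a_nonneg by (subst sum_ennreal) auto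
    finally show ?thesis .
  qed
  have "(\<integral>\<^sup>+ x. ennreal (of_int (max (- x) 0)) \<partial>measure_pmf F) = (\<integral>\<^sup>+ x. (SUP K. g K x) \<partial>measure_pmf F)"
    by (simp add: sup)
  also have "\<dots> = (SUP K. (\<integral>\<^sup>+ x. g K x \<partial>measure_pmf F))"
    by (rule nn_integral_monotone_convergence_SUP[OF inc]) simp
  finally show ?thesis by (simp add: int)
qed

lemma exists_A:
  assumes "mean_negative F"
  shows "\<exists>K. \<xi> * r / (1 - r) < A K"
proof (rule ccontr)
  assume "\<not> ?thesis"
  hence le: "A K \<le> \<xi> * r / (1 - r)" for K by (simp add: not_less)
  have "(SUP K. ennreal (A K)) \<le> ennreal (\<xi> * r / (1 - r))"
    using le by (intro SUP_least) (simp add: ennreal_leI)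
  hence "(\<integral>\<^sup>+ x. ennreal (of_int (max (- x) 0)) \<partial>measure_pmf F) \<le> (\<integral>\<^sup>+ x. ennreal (of_int (max x 0)) \<partial>measure_pmf F)"
    using Eplus_ge Eminus_SUP by (metis order_trans)
  thus False using assms unfolding mean_negative_def by simp
qed

lemma bern: assumes "0 \<le> u" "u \<le> 1" shows "real n * (1 - u) * u ^ n \<le> 1 - u ^ n"
proof (induction n)
  case 0 thus ?case by simp
next
  case (Suc n)
  have "u ^ Suc n \<le> u ^ n" using assms by (simp add: mult_left_le_one_le)
  hence "real (Suc n) * (1 - u) * u ^ Suc n \<le> real (Suc n) * (1 - u) * u ^ n"
    using assms by (intro mult_left_mono) auto
  also have "\<dots> = real n * (1 - u) * u ^ n + (1 - u) * u ^ n" by (simp add: algebra_simps)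
  also have "\<dots> \<le> 1 - u ^ n + (1 - u) * u ^ n" using Suc by simp
  also have "\<dots> = 1 - u ^ Suc n" by (simp add: algebra_simps)
  finally show ?case .
qed

lemma exists_phi_lt1:
  assumes "mean_negative F"
  shows "\<exists>s. 1 < s \<and> s < 1/r \<and> phi s < 1"
proof -
  obtain K where K: "\<xi> * r / (1 - r) < A K" using exists_A[OF assms] by blast
  define G where "G s = (1/s) ^ (Suc K) * A K - \<xi> * r / (1 - r * s)" for s
  have "(G \<longlongrightarrow> (1/1) ^ (Suc K) * A K - \<xi> * r / (1 - r * 1)) (at_right 1)"
    unfolding G_def using r by (intro tendsto_intros) auto
  hence "(G \<longlongrightarrow> A K - \<xi> * r / (1 - r)) (at_right 1)" by simp
  hence ev1: "eventually (\<lambda>s. 0 < G s) (at_right 1)" using K by (intro order_tendstoD(1)) auto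
  have "1 < 1/r" using r by simp
  hence ev2: "eventually (\<lambda>s. s \<in> {1<..<1/r}) (at_right 1)" by (rule eventually_at_right_real)
  have "eventually (\<lambda>s. 0 < G s \<and> s \<in> {1<..<1/r}) (at_right (1::real))"
    using ev1 ev2 by (rule eventually_conj)
  then obtain s where s: "0 < G s" "1 < s" "s < 1/r"
    using eventually_happens[of _ "at_right (1::real)"] by auto
  define u where "u = 1/s"
  have u: "0 < u" "u < 1" using s by (auto simp: u_def)
  have su: "1 - u = (s - 1) * u" using s by (simp add: u_def field_simps)
  have rs: "0 < 1 - r * s" using s r by (simp add: field_simps)
  have "(\<lambda>n. a n * 1 ^ n - a n * u ^ n) sums (P 1 - P u)"
    unfolding P_def using P_summable P_summable_u[of u] u
    by (intro sums_diff summable_sums) auto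
  hence sm: "(\<lambda>n. a n * (1 - u ^ n)) sums (P 1 - P u)" by (simp add: algebra_simps)
  have summ: "summable (\<lambda>n. a n * (1 - u ^ n))" using sm by (simp add: sums_iff)
  have "(\<Sum>n\<le>K. a n * (1 - u ^ n)) \<le> (\<Sum>n. a n * (1 - u ^ n))"
    by (rule sum_le_suminf[OF summ]) (use u in \<open>auto intro!: mult_nonneg_nonneg a_nonneg simp: power_le_one\<close>)
  hence "(\<Sum>n\<le>K. a n * (1 - u ^ n)) \<le> P 1 - P u" using sums_unique[OF sm] by simp
  moreover have "(s - 1) * u ^ Suc K * A K \<le> (\<Sum>n\<le>K. a n * (1 - u ^ n))"
  proof -
    have "(s - 1) * u ^ Suc K * A K = (\<Sum>n\<le>K. (s - 1) * u ^ Suc K * (real n * a n))"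
      unfolding A_def by (rule sum_distrib_left)
    also have "\<dots> = (\<Sum>n\<le>K. a n * (real n * (1 - u) * u ^ K))"
      by (intro sum.cong refl) (simp add: su mult_ac)
    also have "\<dots> \<le> (\<Sum>n\<le>K. a n * (1 - u ^ n))"
    proof (intro sum_mono mult_left_mono a_nonneg)
      fix n assume "n \<in> {..K}"
      hence "u ^ K \<le> u ^ n" using u by (intro power_decreasing) auto
      hence "real n * (1 - u) * u ^ K \<le> real n * (1 - u) * u ^ n" using u by (intro mult_left_mono) auto
      thus "real n * (1 - u) * u ^ K \<le> 1 - u ^ n" using bern[of u n] u by simp
    qed
    finally show ?thesis .
  qed
  moreover have "(s - 1) * (\<xi> * r / (1 - r * s)) < (s - 1) * (u ^ Suc K * A K)"
  proof -
    have "\<xi> * r / (1 - r * s) < u ^ Suc K * A K" using s(1) unfolding G_def u_def by simp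
    thus ?thesis using s(2) by (intro mult_strict_left_mono) auto
  qed
  ultimately have "(s - 1) * (\<xi> * r / (1 - r * s)) < P 1 - P u" by (simp add: algebra_simps)
  moreover have "phi 1 = P 1 + \<xi>" unfolding phi_def using r by simp
  moreover have "(s - 1) * (\<xi> * r / (1 - r * s)) = \<xi> * (1 - r) / (1 - r * s) - \<xi>"
    using rs by (simp add: field_simps)
  ultimately have "phi s < phi 1" unfolding phi_def u_def by simp
  thus ?thesis using phi1 s by auto
qed


lemma phi_isCont:
  assumes "1 < s" "s < 1/r"
  shows "isCont phi s"
proof -
  have ic: "isCont (\<lambda>u. \<Sum>n. a n * u ^ n) (1/s)"
    by (rule isCont_powser[OF P_summable]) (use assms in auto)
  have c0: "isCont (\<lambda>s::real. 1/s) s" using assms by (intro continuous_intros) auto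
  have c1: "isCont (\<lambda>s. P (1/s)) s" using isCont_o2[OF c0 ic] unfolding P_def by simp
  have "1 - r * s \<noteq> 0" using assms r by (simp add: field_simps)
  hence c2: "isCont (\<lambda>s. \<xi> * (1 - r) / (1 - r * s)) s" by (intro continuous_intros) auto
  show ?thesis unfolding phi_def[abs_def] by (rule isCont_add[OF c1 c2])
qed

lemma exists_root:
  assumes "mean_negative F"
  shows "\<exists>s. 1 < s \<and> s < 1/r \<and> phi s = 1"
proof -
  obtain s1 where s1: "1 < s1" "s1 < 1/r" "phi s1 < 1" using exists_phi_lt1[OF assms] by blast
  define \<delta> where "\<delta> = min ((1/r - s1)/2) (\<xi> * (1 - r) / (2 * r))"
  have dpos: "0 < \<delta>" using s1 xi r by (simp add: \<delta>_def)
  define s2 where "s2 = 1/r - \<delta>"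
  have "\<delta> \<le> (1/r - s1)/2" unfolding \<delta>_def by (rule min.cobounded1)
  hence s2: "s1 < s2" "s2 < 1/r" using dpos s1 by (auto simp: s2_def)
  have "1 - r * s2 = r * \<delta>" using r by (simp add: s2_def field_simps)
  moreover have "r * \<delta> \<le> \<xi> * (1 - r) / 2"
  proof -
    have "\<delta> \<le> \<xi> * (1 - r) / (2 * r)" unfolding \<delta>_def by (rule min.cobounded2)
    hence "r * \<delta> \<le> r * (\<xi> * (1 - r) / (2 * r))" using r by (intro mult_left_mono) auto
    thus ?thesis using r by simp
  qed
  moreover have "0 < r * \<delta>" using r dpos by simp
  ultimately have "\<xi> * (1 - r) / (\<xi> * (1 - r) / 2) \<le> \<xi> * (1 - r) / (1 - r * s2)"
    using xi r by (intro divide_left_mono) auto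
  moreover have "\<xi> * (1 - r) / (\<xi> * (1 - r) / 2) = 2" using xi r by simp
  moreover have "0 \<le> P (1/s2)" using s1 s2 by (intro P_nonneg) auto
  ultimately have "1 \<le> phi s2" unfolding phi_def by simp
  moreover have "continuous_on {s1..s2} phi"
    using s1 s2 by (intro continuous_at_imp_continuous_on ballI phi_isCont) auto
  ultimately obtain s where "s1 \<le> s" "s \<le> s2" "phi s = 1"
    using IVT'[of phi s1 1 s2] s1 s2 by auto
  thus ?thesis using s1 s2 by (intro exI[of _ s]) auto
qed


definition c :: "real \<Rightarrow> real" where "c q = (q - r) / (1 - r)"
definition gf :: "real \<Rightarrow> int \<Rightarrow> real" where "gf q z = (if z < 0 then 1 else c q * q ^ nat z)"

lemma pow_shift:
  fixes q :: real
  assumes "0 < q" "t \<le> int m"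
  shows "q ^ nat (int m - t) = q ^ m * ((1/q) powi t)"
proof (cases "0 \<le> t")
  case True
  define k where "k = nat t"
  have k: "t = int k" using True by (simp add: k_def)
  hence "k \<le> m" using assms by simp
  hence "q ^ m = q ^ (m - k) * q ^ k" by (simp add: power_add[symmetric])
  thus ?thesis using k assms \<open>k \<le> m\<close> by (simp add: power_int_def power_one_over nat_diff_distrib)
next
  case False
  define k where "k = nat (- t)"
  have k: "t = - int k" using False by (simp add: k_def)
  have "nat (int m - t) = m + k" using k by simp
  thus ?thesis using k assms False by (simp add: power_int_def power_add power_one_over)
qed

lemma g_eq:
  assumes q: "r < q" "q < 1" and root: "((\<lambda>t. (1/q) powi t * pmf F t) has_sum 1) UNIV" and x: "0 \<le> x"
  shows "((\<lambda>t. pmf F t * gf q (x - t)) has_sum gf q x) UNIV"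
proof -
  obtain m where xm: "x = int m" using x by (metis nonneg_int_cases)
  have qpos: "0 < q" using q r by simp
  define T where "T = \<xi> * (1 - r) * (r / q) ^ Suc m / (1 - r / q)"
  have rq: "0 \<le> r / q" "r / q < 1" using q r by auto
  have up: "((\<lambda>t. pmf F t * gf q (x - t)) has_sum (\<xi> * r ^ Suc m)) {x<..}"
  proof -
    have "{x<..} = {int (Suc m)..}" using xm by auto
    hence "(pmf F has_sum (\<xi> * r ^ Suc m)) {x<..}" using pmf_has_sum[of F "{x<..}"] tail[of "Suc m"] by simp
    thus ?thesis by (rule has_sum_cong[THEN iffD1, rotated]) (auto simp: gf_def)
  qed
  have Th: "((\<lambda>t. (1/q) powi t * pmf F t) has_sum T) {x<..}"
  proof -
    have "(\<lambda>k. (r / q) ^ k) sums (1 / (1 - r / q))" using geometric_sums[of "r / q"] rq by simp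
    hence "((\<lambda>k. (r / q) ^ k) has_sum (1 / (1 - r / q))) UNIV"
      by (rule sums_nonneg_imp_has_sum) (use rq in simp)
    from has_sum_cmult_right[OF this, of "\<xi> * (1 - r) * (r / q) ^ Suc m"]
    have h: "((\<lambda>k. \<xi> * (1 - r) * (r / q) ^ Suc m * (r / q) ^ k) has_sum T) UNIV"
      by (simp add: T_def)
    have "((\<lambda>t. (1/q) powi t * pmf F t) has_sum T) {x<..}
       = ((\<lambda>k. \<xi> * (1 - r) * (r / q) ^ Suc m * (r / q) ^ k) has_sum T) UNIV"
    proof (rule has_sum_reindex_bij_witness[where i="\<lambda>k. int (k + Suc m)" and j="\<lambda>t. nat t - Suc m"])
      fix t :: int assume t: "t \<in> {x<..}"
      define k where "k = nat t"
      have k: "t = int k" "Suc m \<le> k" using t xm by (auto simp: k_def)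
      have "(r / q) ^ Suc m * (r / q) ^ (k - Suc m) = (r / q) ^ (Suc m + (k - Suc m))" by (simp only: power_add)
      also have "Suc m + (k - Suc m) = k" using k(2) by simp
      finally have "(r / q) ^ Suc m * (r / q) ^ (k - Suc m) = (r / q) ^ k" .
      have rhs: "(1/q) powi t * pmf F t = \<xi> * (1 - r) * (r / q) ^ k"
        using k pmf_pos[of k] by (simp add: power_int_def power_divide power_one_over)
      have "\<xi> * (1 - r) * (r / q) ^ Suc m * (r / q) ^ (nat t - Suc m) = \<xi> * (1 - r) * ((r / q) ^ Suc m * (r / q) ^ (k - Suc m))"
        by (simp only: k(1) nat_int mult.assoc)
      also have "\<dots> = \<xi> * (1 - r) * (r / q) ^ k" by (simp only: \<open>(r / q) ^ Suc m * (r / q) ^ (k - Suc m) = (r / q) ^ k\<close>)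
      finally show "\<xi> * (1 - r) * (r / q) ^ Suc m * (r / q) ^ (nat t - Suc m) = (1/q) powi t * pmf F t"
        using rhs by simp
    qed (use xm in auto)
    thus ?thesis using h by simp
  qed
  have "(\<lambda>t. (1/q) powi t * pmf F t) summable_on {..x}"
    using root has_sum_imp_summable summable_on_subset_banach by blast
  then obtain L where L: "((\<lambda>t. (1/q) powi t * pmf F t) has_sum L) {..x}" using has_sum_infsum by blast
  have "((\<lambda>t. (1/q) powi t * pmf F t) has_sum (L + T)) ({..x} \<union> {x<..})"
    by (rule has_sum_Un_disjoint[OF L Th]) auto
  moreover have "{..x} \<union> {x<..} = UNIV" by auto
  ultimately have "L + T = 1" using root has_sum_unique by fastforce
  hence "L = 1 - T" by simp
  hence L': "((\<lambda>t. (1/q) powi t * pmf F t) has_sum (1 - T)) {..x}" using L by simp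
  from has_sum_cmult_right[OF L', of "c q * q ^ m"]
  have "((\<lambda>t. c q * q ^ m * ((1/q) powi t * pmf F t)) has_sum (c q * q ^ m * (1 - T))) {..x}" .
  hence low: "((\<lambda>t. pmf F t * gf q (x - t)) has_sum (c q * q ^ m * (1 - T))) {..x}"
  proof (rule has_sum_cong[THEN iffD1, rotated])
    fix t assume "t \<in> {..x}"
    hence "t \<le> int m" using xm by simp
    thus "c q * q ^ m * ((1/q) powi t * pmf F t) = pmf F t * gf q (x - t)"
      using pow_shift[OF qpos, of t m] xm by (simp add: gf_def mult_ac)
  qed
  have "((\<lambda>t. pmf F t * gf q (x - t)) has_sum (c q * q ^ m * (1 - T) + \<xi> * r ^ Suc m)) ({..x} \<union> {x<..})"
    by (rule has_sum_Un_disjoint[OF low up]) auto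
  moreover have eq: "c q * q ^ m * T = \<xi> * r ^ Suc m"
  proof -
    have "T = \<xi> * (1 - r) * (r ^ Suc m / (q * q ^ m)) / ((q - r) / q)"
      unfolding T_def using qpos by (simp add: power_divide diff_divide_distrib)
    also have "\<dots> = (\<xi> * (1 - r) * r ^ Suc m) / ((q - r) * q ^ m)"
      by (rule alg1) (use qpos q r in auto)
    finally have "c q * q ^ m * T = (q - r) / (1 - r) * q ^ m * ((\<xi> * (1 - r) * r ^ Suc m) / ((q - r) * q ^ m))"
      by (simp add: c_def)
    also have "\<dots> = \<xi> * r ^ Suc m" by (rule alg2) (use qpos q r in auto)
    finally show ?thesis .
  qed
  moreover have "{..x} \<union> {x<..} = UNIV" by auto
  moreover have "c q * q ^ m * (1 - T) + \<xi> * r ^ Suc m = gf q x"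
    using eq xm by (simp add: gf_def right_diff_distrib)
  ultimately show ?thesis by simp
qed

lemma gf_nonneg: assumes "r < q" "q < 1" shows "0 \<le> gf q z"
  using assms r by (auto simp: gf_def c_def)

lemma identify:
  assumes q: "r < q" "q < 1" and root: "((\<lambda>t. (1/q) powi t * pmf F t) has_sum 1) UNIV"
  shows "h F z = gf q z"
proof -
  define d where "d z = gf q z - h F z" for z
  have hle: "h F z \<le> gf q z" for z
  proof (rule h_min)
    show "0 \<le> gf q z" for z by (rule gf_nonneg[OF q])
    show "1 \<le> gf q z" if "z < 0" for z using that by (simp add: gf_def)
    show "((\<lambda>t. pmf F t * gf q (z - t)) has_sum gf q z) UNIV" if "0 \<le> z" for z
      by (rule g_eq[OF q root that])
  qed
  have dnn: "0 \<le> d z" for z using hle[of z] by (simp add: d_def)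
  have dneg: "d z = 0" if "z < 0" for z using that h_neg[of z F] by (simp add: d_def gf_def)
  have deq: "((\<lambda>t. pmf F t * d (x - t)) has_sum d x) UNIV" if x: "0 \<le> x" for x
  proof -
    have "((\<lambda>t. pmf F t * gf q (x - t) + (-1) * (pmf F t * h F (x - t))) has_sum (gf q x + (-1) * h F x)) UNIV"
      by (intro has_sum_add g_eq[OF q root x] has_sum_cmult_right h_eq x)
    thus ?thesis by (simp add: d_def algebra_simps)
  qed
  have "d y = 0" for y
  proof (rule ccontr)
    assume "d y \<noteq> 0"
    hence dy: "0 < d y" using dnn[of y] by simp
    hence y0: "0 \<le> y" using dneg[of y] by (cases "y < 0") auto
    have cpos: "0 < c q" using q r by (simp add: c_def)
    have "(\<lambda>n. c q * q ^ n) \<longlonglongrightarrow> c q * 0"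
      by (intro tendsto_intros LIMSEQ_power_zero) (use q r in auto)
    hence "eventually (\<lambda>n. c q * q ^ n < d y) sequentially" using dy by (intro order_tendstoD(2)) auto
    then obtain K where K: "c q * q ^ K < d y" by (auto simp: eventually_sequentially)
    define K' where "K' = max K (nat y)"
    define S where "S = {0..int K'}"
    have fin: "finite (d ` S)" "d ` S \<noteq> {}" by (auto simp: S_def)
    obtain x0 where x0: "x0 \<in> S" "d x0 = Max (d ` S)" using Max_in[OF fin] by auto
    have yS: "y \<in> S" using y0 by (auto simp: S_def K'_def)
    have dyx0: "d y \<le> d x0" using Max_ge[OF fin(1)] yS x0 by auto
    have bound: "d x \<le> d x0" for x
    proof (cases "x < 0")
      case True thus ?thesis using dneg[OF True] dnn[of y] dyx0 by simp
    next
      case False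
      show ?thesis
      proof (cases "x \<le> int K'")
        case True
        hence "x \<in> S" using False by (simp add: S_def)
        thus ?thesis using Max_ge[OF fin(1)] x0 by auto
      next
        case False2: False
        have "d x \<le> gf q x" using h_nonneg[of F x] by (simp add: d_def)
        also have "gf q x = c q * q ^ nat x" using False by (simp add: gf_def)
        also have "\<dots> \<le> c q * q ^ K"
        proof -
          have "K \<le> nat x" using False2 by (simp add: K'_def)
          hence "q ^ nat x \<le> q ^ K" using q r by (intro power_decreasing) auto
          thus ?thesis using cpos by (intro mult_left_mono) auto
        qed
        also have "\<dots> < d y" by (rule K)
        finally show ?thesis using dyx0 by simp
      qed
    qed
    have x00: "0 \<le> x0" using x0 by (simp add: S_def)
    have sum1: "((\<lambda>t. pmf F t * d x0) has_sum d x0) UNIV"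
    proof -
      have "(pmf F has_sum 1) UNIV" using pmf_has_sum[of F UNIV] by simp
      from has_sum_cmult_right[OF this, of "d x0"] show ?thesis by (simp add: mult.commute)
    qed
    have le: "pmf F t * d (x0 - t) \<le> pmf F t * d x0" if "t \<in> UNIV" for t
      by (intro mult_left_mono bound) simp
    have strict: "pmf F (x0 + 1) * d (x0 - (x0 + 1)) < pmf F (x0 + 1) * d x0"
    proof -
      have e: "x0 + 1 = int (Suc (nat x0))" using x00 by simp
      have "pmf F (x0 + 1) = \<xi> * (1 - r) * r ^ Suc (nat x0)" unfolding e by (rule pmf_pos)
      hence "0 < pmf F (x0 + 1)" using xi r by simp
      moreover have "d (x0 - (x0 + 1)) = 0" using dneg[of "-1"] by simp
      ultimately show ?thesis using dy dyx0 by simp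
    qed
    have "d x0 < d x0" by (rule has_sum_strict_mono[OF deq[OF x00] sum1 le UNIV_I strict])
    thus False by simp
  qed
  thus ?thesis unfolding d_def by (metis eq_iff_diff_eq_0)
qed

end

theorem mainTheorem2:
  fixes M :: "'a measure" and X :: "nat \<Rightarrow> 'a \<Rightarrow> int" and F :: "int pmf"
    and \<xi> r :: real
  assumes "prob_space M"
    and "prob_space.indep_vars M (\<lambda>_. count_space UNIV) X UNIV"
    and "\<And>i. distr M (count_space UNIV) (X i) = measure_pmf F"
    and "not_on_half_axis F"
    and "mean_negative F"
    and "0 < \<xi>" "\<xi> < 1" "0 < r" "r < 1"
    and "\<And>x::nat. measure_pmf.prob F {int x..} = \<xi> * r ^ x"
  defines "p \<equiv> measure M {\<omega> \<in> space M. \<exists>n. walk X n \<omega> > 0}"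
  shows "p < 1
    \<and> (\<forall>x::nat. measure M {\<omega> \<in> space M. \<exists>n. walk X n \<omega> > int x}
                 = p * (1 - (1 - p) * (1 - r)) ^ x)
    \<and> 1 < 1 / (1 - (1 - p) * (1 - r)) \<and> 1 / (1 - (1 - p) * (1 - r)) < 1 / r
    \<and> ((\<lambda>x. (1 / (1 - (1 - p) * (1 - r))) powi x * pmf F x) has_sum 1) UNIV
    \<and> (\<forall>s::real. 1 < s \<and> s < 1 / r \<and> ((\<lambda>x. s powi x * pmf F x) has_sum 1) UNIV
          \<longrightarrow> s = 1 / (1 - (1 - p) * (1 - r)))"
proof -
  interpret G: geo F \<xi> r by unfold_locales (use assms(6-10) in auto)
  obtain s0 where s0: "1 < s0" "s0 < 1/r" "G.phi s0 = 1" using G.exists_root[OF assms(5)] by blast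
  define q0 where "q0 = 1 / s0"
  have rs0: "r * s0 < 1" using s0(2) assms(8) by (simp add: field_simps)
  have q0: "r < q0" "q0 < 1" using s0(1) rs0 assms(8) by (auto simp: q0_def field_simps)
  have root0: "((\<lambda>t. (1/q0) powi t * pmf F t) has_sum 1) UNIV"
    using G.phi_has_sum[of s0] s0 by (simp add: q0_def)
  have hq0: "h F z = G.gf q0 z" for z by (rule G.identify[OF q0 root0])
  have tr: "measure M {\<omega> \<in> space M. \<exists>n. walk X n \<omega> > z} = h F z" for z
    by (rule transfer[OF assms(1-3)])
  have p_eq: "p = G.c q0" using tr[of 0] hq0[of 0] by (simp add: p_def G.gf_def)
  have r1: "1 - r \<noteq> 0" using assms(9) by simp
  have qp: "1 - (1 - p) * (1 - r) = q0"
  proof -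
    have "p * (1 - r) = q0 - r" using p_eq r1 by (simp add: G.c_def)
    moreover have "(1 - p) * (1 - r) = (1 - r) - p * (1 - r)" by (simp add: algebra_simps)
    ultimately have "(1 - p) * (1 - r) = (1 - r) - (q0 - r)" by simp
    thus ?thesis by simp
  qed
  have c1: "p < 1" using p_eq q0 assms(9) by (simp add: G.c_def)
  have c2: "\<forall>x::nat. measure M {\<omega> \<in> space M. \<exists>n. walk X n \<omega> > int x} = p * (1 - (1 - p) * (1 - r)) ^ x"
    using tr hq0 p_eq qp by (simp add: G.gf_def)
  have c3: "1 < 1 / (1 - (1 - p) * (1 - r))" "1 / (1 - (1 - p) * (1 - r)) < 1 / r"
    using qp s0 by (auto simp: q0_def)
  have c4: "((\<lambda>x. (1 / (1 - (1 - p) * (1 - r))) powi x * pmf F x) has_sum 1) UNIV"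
    using root0 qp by simp
  have c5: "s = 1 / (1 - (1 - p) * (1 - r))"
    if s: "1 < s" "s < 1 / r" "((\<lambda>x. s powi x * pmf F x) has_sum 1) UNIV" for s
  proof -
    define q where "q = 1 / s"
    have rs: "r * s < 1" using s(2) assms(8) by (simp add: field_simps)
    have q: "r < q" "q < 1" using s(1) rs assms(8) by (auto simp: q_def field_simps)
    have root: "((\<lambda>t. (1/q) powi t * pmf F t) has_sum 1) UNIV" using s(3) s(1) by (simp add: q_def)
    have "h F 0 = G.c q" using G.identify[OF q root, of 0] by (simp add: G.gf_def)
    moreover have "h F 0 = G.c q0" using hq0[of 0] by (simp add: G.gf_def)
    ultimately have "G.c q = G.c q0" by simp
    hence "q = q0" using r1 unfolding G.c_def by (auto simp: divide_cancel_right)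
    thus ?thesis using qp s(1) by (simp add: q_def q0_def)
  qed
  show ?thesis using c1 c2 c3 c4 c5 by blast
qed

end
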